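(* Let $D$ be a strong nonseparable digraph and let $(D_0,D_1,\ldots,D_k)$ be an ear decomposition of $D$. Let $i\in\{0,\ldots,k-1\}$ and let $P_i=(x_0,x_1,\ldots,x_{r-1},x_r)$ be the ear of $D_i$ in $D$ (so $D_{i+1}=D_i\cup P_i$), with $l(P_i)\geq 2$. If $D_i$ has a kernel $N$ and one of the following holds: (1) $x_0,x_r\in N$ and $l(P_i)$ is even; (2) $x_0\in N$, $x_r\notin N$ and $l(P_i)$ is odd; (3) $x_0\notin N$ and $x_r\in N$; (4) $x_0,x_r\notin N$; then $D_{i+1}$ has a kernel.
   Context: All digraphs are finite, without loops or multiple arcs. Paths and cycles are directed; the length $l(P)$ of a path $P$ is its number of arcs. A digraph is strong if for every ordered pair of vertices $x,y$ there is a directed path from $x$ to $y$; it is nonseparable if its underlying undirected graph is nonseparable (has no cut vertex). For a subdigraph $H$ of $D$, an ear of $H$ in $D$ is a directed path $(x_0,\ldots,x_r)$ in $D$ whose end vertices lie in $H$ and whose internal vertices do not lie in $H$. An ear decomposition of a nonseparable strong digraph $D$ is a sequence $(D_0,\ldots,D_k)$ of nonseparable strong subdigraphs of $D$ such that $D_0$ is a directed cycle, $D_{j+1}=D_j\cup P_j$ with $P_j$ an ear of $D_j$ in $D$ for each $j\in\{0,\ldots,k-1\}$, and $D_k=D$. A kernel of a digraph is a set $N$ of vertices that is independent (no arc between two of its vertices) and absorbent (every vertex not in $N$ has an out-neighbour in $N$). *)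

theory Defs
  imports Main
begin

definition digraph :: "'a set \<Rightarrow> ('a \<times> 'a) set \<Rightarrow> bool" where
  "digraph V A \<longleftrightarrow> finite V \<and> A \<subseteq> V \<times> V \<and> (\<forall>x. (x, x) \<notin> A)"

definition subdigraph :: "'a set \<Rightarrow> ('a \<times> 'a) set \<Rightarrow> 'a set \<Rightarrow> ('a \<times> 'a) set \<Rightarrow> bool" where
  "subdigraph V' A' V A \<longleftrightarrow> digraph V' A' \<and> V' \<subseteq> V \<and> A' \<subseteq> A"

definition path_arcs :: "'a list \<Rightarrow> ('a \<times> 'a) set" where
  "path_arcs xs = set (zip xs (tl xs))"

definition dpath :: "('a \<times> 'a) set \<Rightarrow> 'a list \<Rightarrow> bool" where
  "dpath A xs \<longleftrightarrow> xs \<noteq> [] \<and> distinct xs \<and> path_arcs xs \<subseteq> A"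

definition plen :: "'a list \<Rightarrow> nat" where
  "plen xs = length xs - 1"

definition strong :: "'a set \<Rightarrow> ('a \<times> 'a) set \<Rightarrow> bool" where
  "strong V A \<longleftrightarrow> (\<forall>x\<in>V. \<forall>y\<in>V. \<exists>xs. dpath A xs \<and> hd xs = x \<and> last xs = y)"

definition und_connected_on :: "'a set \<Rightarrow> ('a \<times> 'a) set \<Rightarrow> bool" where
  "und_connected_on S A \<longleftrightarrow>
     (\<forall>x\<in>S. \<forall>y\<in>S. (x, y) \<in> ({(u, v). u \<in> S \<and> v \<in> S \<and> ((u, v) \<in> A \<or> (v, u) \<in> A)})\<^sup>*)"

definition nonseparable :: "'a set \<Rightarrow> ('a \<times> 'a) set \<Rightarrow> bool" where
  "nonseparable V A \<longleftrightarrow> und_connected_on V A \<and> (\<forall>v\<in>V. und_connected_on (V - {v}) A)"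

definition is_dcycle :: "'a set \<Rightarrow> ('a \<times> 'a) set \<Rightarrow> bool" where
  "is_dcycle V A \<longleftrightarrow> (\<exists>xs. length xs \<ge> 2 \<and> distinct xs \<and> set xs = V \<and>
      A = path_arcs xs \<union> {(last xs, hd xs)})"

definition is_ear :: "'a set \<Rightarrow> ('a \<times> 'a) set \<Rightarrow> 'a set \<Rightarrow> ('a \<times> 'a) set \<Rightarrow> 'a list \<Rightarrow> bool" where
  "is_ear VH AH V A xs \<longleftrightarrow> dpath A xs \<and> length xs \<ge> 2 \<and> hd xs \<in> VH \<and> last xs \<in> VH \<and>
      (\<forall>j. 0 < j \<and> j < length xs - 1 \<longrightarrow> xs ! j \<notin> VH)"

text \<open>Ear decomposition (D_0,...,D_k) of D=(V,A), with D_j = (Vs j, As j) and ears Ps j.\<close>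
definition ear_decomposition ::
  "'a set \<Rightarrow> ('a \<times> 'a) set \<Rightarrow> nat \<Rightarrow> (nat \<Rightarrow> 'a set) \<Rightarrow> (nat \<Rightarrow> ('a \<times> 'a) set) \<Rightarrow> (nat \<Rightarrow> 'a list) \<Rightarrow> bool" where
  "ear_decomposition V A k Vs As Ps \<longleftrightarrow>
     (\<forall>j\<le>k. subdigraph (Vs j) (As j) V A \<and> nonseparable (Vs j) (As j) \<and> strong (Vs j) (As j)) \<and>
     is_dcycle (Vs 0) (As 0) \<and>
     (\<forall>j<k. is_ear (Vs j) (As j) V A (Ps j) \<and>
            Vs (Suc j) = Vs j \<union> set (Ps j) \<and> As (Suc j) = As j \<union> path_arcs (Ps j)) \<and>
     Vs k = V \<and> As k = A"

definition kernel :: "'a set \<Rightarrow> ('a \<times> 'a) set \<Rightarrow> 'a set \<Rightarrow> bool" where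
  "kernel V A N \<longleftrightarrow> N \<subseteq> V \<and> (\<forall>x\<in>N. \<forall>y\<in>N. (x, y) \<notin> A) \<and>
     (\<forall>x\<in>V - N. \<exists>y\<in>N. (x, y) \<in> A)"

end

theory Submission
  imports Defs
begin

lemma path_arcs_nth: "path_arcs xs = {(xs!j, xs!Suc j) | j. Suc j < length xs}"
  unfolding path_arcs_def
  by (auto simp: in_set_zip nth_tl set_zip)

lemma parl: "j < (r::nat) \<Longrightarrow> even (r - j) \<noteq> even (r - Suc j)"
proof -
  assume "j < r"
  then have "r - j = Suc (r - Suc j)" by arith
  then show ?thesis by simp
qed

theorem mainTheorem11:
  fixes V :: "'a set" and A :: "('a \<times> 'a) set"
    and Vs :: "nat \<Rightarrow> 'a set" and As :: "nat \<Rightarrow> ('a \<times> 'a) set" and Ps :: "nat \<Rightarrow> 'a list"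
    and k i :: nat and N :: "'a set"
  assumes "digraph V A" and "strong V A" and "nonseparable V A"
    and "ear_decomposition V A k Vs As Ps"
    and "i < k"
    and "plen (Ps i) \<ge> 2"
    and "kernel (Vs i) (As i) N"
    and "(hd (Ps i) \<in> N \<and> last (Ps i) \<in> N \<and> even (plen (Ps i))) \<or>
         (hd (Ps i) \<in> N \<and> last (Ps i) \<notin> N \<and> odd (plen (Ps i))) \<or>
         (hd (Ps i) \<notin> N \<and> last (Ps i) \<in> N) \<or>
         (hd (Ps i) \<notin> N \<and> last (Ps i) \<notin> N)"
  shows "\<exists>N'. kernel (Vs (Suc i)) (As (Suc i)) N'"
proof -
  define xs where "xs = Ps i"
  define r where "r = length xs - 1"
  have ED: "\<forall>j\<le>k. subdigraph (Vs j) (As j) V A" "is_ear (Vs i) (As i) V A xs"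
    "Vs (Suc i) = Vs i \<union> set xs" "As (Suc i) = As i \<union> path_arcs xs"
    using assms(4,5) unfolding ear_decomposition_def xs_def by auto
  have sub: "As i \<subseteq> Vs i \<times> Vs i"
    using ED(1) assms(5) unfolding subdigraph_def digraph_def by auto
  have r2: "r \<ge> 2" and len: "length xs = Suc r" using assms(6) unfolding r_def xs_def plen_def by auto
  have dist: "distinct xs" using ED(2) unfolding is_ear_def dpath_def by auto
  have inner: "\<And>j. 0 < j \<Longrightarrow> j < r \<Longrightarrow> xs!j \<notin> Vs i"
    using ED(2) unfolding is_ear_def r_def by auto
  have hd0: "hd xs = xs!0" using len by (cases xs) auto
  have lastr: "last xs = xs!r" using len by (cases xs) (auto simp: last_conv_nth r_def)
  have ends: "xs!0 \<in> Vs i" "xs!r \<in> Vs i" using ED(2) hd0 lastr unfolding is_ear_def by auto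
  have K: "N \<subseteq> Vs i" "\<forall>x\<in>N. \<forall>y\<in>N. (x, y) \<notin> As i" "\<forall>x\<in>Vs i - N. \<exists>y\<in>N. (x, y) \<in> As i"
    using assms(7) unfolding kernel_def by auto
  have cases: "(xs!0 \<in> N \<and> xs!r \<in> N \<and> even r) \<or> (xs!0 \<in> N \<and> xs!r \<notin> N \<and> odd r) \<or>
     xs!0 \<notin> N"
    using assms(8) hd0 lastr unfolding xs_def[symmetric] plen_def r_def by auto
  define c where "c = (\<lambda>j. even (r - j) = (xs!r \<in> N))"
  define S where "S = {xs!j | j. 0 < j \<and> j < r \<and> c j}"
  define mem where "mem = (\<lambda>m. if 0 < m \<and> m < r then c m else xs!m \<in> N)"
  have memc: "0 < m \<Longrightarrow> m < r \<Longrightarrow> mem m = c m" for m unfolding mem_def by simp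
  have memI: "(xs!m \<in> N \<union> S) = mem m" if "m \<le> r" for m
  proof -
    have eq: "xs!m = xs!j \<longleftrightarrow> m = j" if "j \<le> r" for j
      using nth_eq_iff_index_eq[OF dist] len \<open>m \<le> r\<close> that by auto
    have eq': "xs!j = xs!m \<longleftrightarrow> j = m" if "j \<le> r" for j
      using eq[OF that] by auto
    show ?thesis
    proof (cases "0 < m \<and> m < r")
      case True
      then have "xs!m \<notin> N" using inner K(1) by blast
      have "xs!m \<in> S \<longleftrightarrow> c m"
      proof
        assume "xs!m \<in> S"
        then obtain j where "xs!m = xs!j" "0 < j" "j < r" "c j" unfolding S_def by auto
        then show "c m" using eq[of j] by auto
      next
        assume "c m" then show "xs!m \<in> S" using True unfolding S_def by auto
      qed
      then show ?thesis using True \<open>xs!m \<notin> N\<close> unfolding mem_def by auto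
    next
      case False
      then have "xs!m \<notin> S" using eq unfolding S_def using that by auto
      then show ?thesis using False unfolding mem_def by auto
    qed
  qed
  have SV: "S \<inter> Vs i = {}" using inner unfolding S_def by auto
  have "kernel (Vs (Suc i)) (As (Suc i)) (N \<union> S)"
    unfolding kernel_def
  proof (intro conjI ballI)
    show "N \<union> S \<subseteq> Vs (Suc i)" using K(1) ED(3) len unfolding S_def by auto
  next
    fix x y assume x: "x \<in> N \<union> S" and y: "y \<in> N \<union> S"
    show "(x, y) \<notin> As (Suc i)"
    proof
      assume "(x, y) \<in> As (Suc i)"
      then consider "(x, y) \<in> As i" | j where "x = xs!j" "y = xs!Suc j" "Suc j < length xs"
        using ED(4) unfolding path_arcs_nth by blast
      then show False
      proof cases
        case 1
        then have "x \<in> N" "y \<in> N" using sub x y SV by auto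
        then show False using K(2) 1 by auto
      next
        case 2
        then have mj: "mem j" "mem (Suc j)" using memI x y len by auto
        consider "j = 0" | "Suc j = r" "0 < j" | "0 < j" "Suc j < r" using 2(3) len by linarith
        then show False
        proof cases
          case 1 then show ?thesis using mj cases r2 unfolding mem_def c_def
            by (auto split: if_splits)
        next
          case 2 then show ?thesis using mj unfolding mem_def c_def
            by (auto split: if_splits)
        next
          case 3
          have par: "even (r - j) \<noteq> even (r - Suc j)" using parl[of j r] 3(2) Suc_lessD by blast
          have cj: "c j" using mj(1) memc[of j] 3 Suc_lessD by metis
          have cs: "c (Suc j)" using mj(2) memc[of "Suc j"] 3 by blast
          have "even (r - j) = even (r - Suc j)" using cj cs unfolding c_def by simp
          then show ?thesis using par by simp
        qed
      qed
    qed
  next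
    fix x assume x: "x \<in> Vs (Suc i) - (N \<union> S)"
    show "\<exists>y\<in>N \<union> S. (x, y) \<in> As (Suc i)"
    proof (cases "x \<in> Vs i")
      case True
      then show ?thesis using K(3) x ED(4) by blast
    next
      case False
      then have "x \<in> set xs" using x ED(3) by auto
      then obtain m where m: "m < length xs" "x = xs!m" by (auto simp: in_set_conv_nth)
      have "m \<noteq> 0" by (metis False ends(1) m(2))
      moreover have "m \<noteq> r" by (metis False ends(2) m(2))
      ultimately have m0: "0 < m" "m < r" using m(1) len by linarith+
      have "\<not> mem m" using memI[of m] m0 x m by auto
      have par: "even (r - m) \<noteq> even (r - Suc m)" using parl[OF m0(2)] .
      have "mem (Suc m)"
      proof (cases "Suc m = r")
        case True
        then show ?thesis using \<open>\<not> mem m\<close> m0 par unfolding mem_def c_def by auto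
      next
        case False
        then show ?thesis using \<open>\<not> mem m\<close> m0 par unfolding mem_def c_def by auto
      qed
      then have "xs!Suc m \<in> N \<union> S" using memI[of "Suc m"] m0 by auto
      moreover have "(xs!m, xs!Suc m) \<in> path_arcs xs" unfolding path_arcs_nth using m0 len by auto
      then have "(x, xs!Suc m) \<in> As (Suc i)" using ED(4) m(2) by auto
      ultimately show ?thesis by blast
    qed
  qed
  then show ?thesis by blast
qed

end
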